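(* Let $X,Y$ be nonempty compact Hausdorff spaces, $E\neq\{0_E\}$ a complex locally convex space, and $T:C(X,E)\to C(Y,E)$ a map with $\operatorname{Ran}(TF-TG)\subset\operatorname{Ran}(F-G)$ for all $F,G\in C(X,E)$ and $T(1\otimes 0_E)=1\otimes 0_E$. Then for each $u\in E\setminus\{0_E\}$ there exists a continuous map $\varphi_u:Y\to X$ such that $\tilde T_u f=f\circ\varphi_u$ for all $f\in C(X)$; in particular $\tilde T_u$ is linear.
   Context: $C(X,E)$ is the vector space of continuous functions $X\to E$; $\operatorname{Ran}(F)=\{F(x):x\in X\}$; $f\otimes u$ denotes $x\mapsto f(x)u$, and $1\otimes 0_E$ is the constant function $0_E$. For $u\in E\setminus\{0_E\}$ and $f\in C(X)$, $\tilde T_u f\in C(Y)$ is the unique function $Y\to\mathbb{C}$ with $T(f\otimes u)(y)=(\tilde T_uf)(y)u$ for all $y\in Y$. *)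

theory Defs
  imports "HOL-Analysis.Analysis"
begin

text \<open>A complex (Hausdorff) locally convex space: the carrier is the whole type 'e,
  addition/zero come from the class ab_group_add, complex scalar multiplication is
  the explicit operation smul, and the topology is tau.\<close>

definition complex_convex :: "(complex \<Rightarrow> 'e::ab_group_add \<Rightarrow> 'e) \<Rightarrow> 'e set \<Rightarrow> bool" where
  "complex_convex smul V \<longleftrightarrow>
     (\<forall>x\<in>V. \<forall>y\<in>V. \<forall>t::real. 0 \<le> t \<and> t \<le> 1 \<longrightarrow>
        smul (complex_of_real t) x + smul (complex_of_real (1 - t)) y \<in> V)"

definition complex_lcs :: "'e::ab_group_add topology \<Rightarrow> (complex \<Rightarrow> 'e \<Rightarrow> 'e) \<Rightarrow> bool" where
  "complex_lcs tau smul \<longleftrightarrow>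
     (\<forall>a x y. smul a (x + y) = smul a x + smul a y) \<and>
     (\<forall>a b x. smul (a + b) x = smul a x + smul b x) \<and>
     (\<forall>a b x. smul a (smul b x) = smul (a * b) x) \<and>
     (\<forall>x. smul 1 x = x) \<and>
     topspace tau = UNIV \<and>
     Hausdorff_space tau \<and>
     continuous_map (prod_topology tau tau) tau (\<lambda>(x, y). x + y) \<and>
     continuous_map (prod_topology euclidean tau) tau (\<lambda>(a, x). smul a x) \<and>
     (\<forall>U. openin tau U \<and> 0 \<in> U \<longrightarrow>
        (\<exists>V. openin tau V \<and> 0 \<in> V \<and> V \<subseteq> U \<and> complex_convex smul V))"

definition tensor :: "(complex \<Rightarrow> 'e \<Rightarrow> 'e) \<Rightarrow> ('a \<Rightarrow> complex) \<Rightarrow> 'e \<Rightarrow> 'a \<Rightarrow> 'e" where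
  "tensor smul f u = (\<lambda>x. smul (f x) u)"

definition Ran :: "'a topology \<Rightarrow> ('a \<Rightarrow> 'e) \<Rightarrow> 'e set" where
  "Ran X F = F ` topspace X"

definition tildeT :: "(complex \<Rightarrow> 'e \<Rightarrow> 'e) \<Rightarrow> (('a \<Rightarrow> 'e) \<Rightarrow> ('b \<Rightarrow> 'e)) \<Rightarrow> 'e
                      \<Rightarrow> ('a \<Rightarrow> complex) \<Rightarrow> 'b \<Rightarrow> complex" where
  "tildeT smul T u f = (\<lambda>y. THE c. T (tensor smul f u) y = smul c u)"

end

theory Submission imports Defs begin

lemma cm_mult[continuous_intros]:
  fixes f g :: "'a \<Rightarrow> 'b::real_normed_algebra"
  shows "continuous_map X euclidean f \<Longrightarrow> continuous_map X euclidean g \<Longrightarrow> continuous_map X euclidean (\<lambda>x. f x * g x)"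
  by (simp add: continuous_map_atin tendsto_mult)

lemma cm_of_real[continuous_intros]:
  "continuous_map X euclideanreal b \<Longrightarrow> continuous_map X euclidean (\<lambda>x. complex_of_real (b x))"
  by (simp add: continuous_map_atin tendsto_of_real)

lemma cm_Re[continuous_intros]:
  "continuous_map X euclidean f \<Longrightarrow> continuous_map X euclideanreal (\<lambda>x. Re (f x))"
  by (simp add: continuous_map_atin tendsto_Re)

lemma cm_Im[continuous_intros]:
  "continuous_map X euclidean f \<Longrightarrow> continuous_map X euclideanreal (\<lambda>x. Im (f x))"
  by (simp add: continuous_map_atin tendsto_Im)

lemma affine_real_slopes:
  fixes \<phi> :: "complex \<Rightarrow> complex"
  assumes S: "\<And>a b. \<exists>r::real. \<phi> a - \<phi> b = (a - b) * of_real r"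
  shows "\<phi> z = \<phi> 0 + z * (\<phi> 1 - \<phi> 0)"
proof -
  obtain r0 where r0: "\<phi> 1 - \<phi> 0 = of_real r0" using S[of 1 0] by auto
  have nonreal: "\<phi> w = \<phi> 0 + w * of_real r0" if "Im w \<noteq> 0" for w
  proof -
    obtain s where s: "\<phi> w - \<phi> 0 = w * of_real s" using S[of w 0] by auto
    obtain q where q: "\<phi> w - \<phi> 1 = (w - 1) * of_real q" using S[of w 1] by auto
    have e: "w * of_real s = (w - 1) * of_real q + of_real r0"
      using s q r0 by (simp add: algebra_simps)
    have "Im w * s = Im w * q" using arg_cong[OF e, of Im] by simp
    hence sq: "s = q" using that by simp
    have "Re w * s = (Re w - 1) * q + r0" using arg_cong[OF e, of Re] by (simp add: algebra_simps)
    hence "s = r0" using sq by (simp add: algebra_simps)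
    thus ?thesis using s by (simp add: algebra_simps)
  qed
  have "\<phi> z = \<phi> 0 + z * of_real r0"
  proof (cases "Im z = 0")
    case False thus ?thesis by (rule nonreal)
  next
    case True
    have i: "\<phi> \<i> = \<phi> 0 + \<i> * of_real r0" by (rule nonreal) simp
    obtain s where s: "\<phi> z - \<phi> 0 = z * of_real s" using S[of z 0] by auto
    obtain q where q: "\<phi> z - \<phi> \<i> = (z - \<i>) * of_real q" using S[of z \<i>] by auto
    have e: "z * of_real s = (z - \<i>) * of_real q + \<i> * of_real r0"
      using s q i by (simp add: algebra_simps)
    have "0 = r0 - q" using arg_cong[OF e, of Im] True by simp
    moreover have "Re z * s = Re z * q" using arg_cong[OF e, of Re] True by simp
    ultimately show ?thesis
    proof (cases "Re z = 0")
      case True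
      with \<open>Im z = 0\<close> have "z = 0" by (simp add: complex_eq_iff)
      thus ?thesis by simp
    next
      case False
      with \<open>Re z * s = Re z * q\<close> \<open>0 = r0 - q\<close> have "s = r0" by simp
      thus ?thesis using s by (simp add: algebra_simps)
    qed
  qed
  thus ?thesis using r0 by simp
qed

locale rangeL =
  fixes X :: "'a topology" and L :: "('a \<Rightarrow> complex) \<Rightarrow> complex"
  assumes cpt: "compact_space X" and ne: "topspace X \<noteq> {}"
    and L0: "L (\<lambda>x. 0) = 0"
    and P1: "\<And>f g. continuous_map X euclidean f \<Longrightarrow> continuous_map X euclidean g \<Longrightarrow>
               \<exists>x\<in>topspace X. L f - L g = f x - g x"
begin

lemma range: "continuous_map X euclidean f \<Longrightarrow> \<exists>x\<in>topspace X. L f = f x"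
  using P1[of f "\<lambda>x. 0"] L0 by simp

lemma range_real: "continuous_map X euclideanreal b \<Longrightarrow> Im (L (\<lambda>x. of_real (b x))) = 0"
proof -
  assume b: "continuous_map X euclideanreal b"
  from range[OF cm_of_real[OF b]] obtain x where "L (\<lambda>x. of_real (b x)) = of_real (b x)" by auto
  thus ?thesis by simp
qed

lemma cont_lin: "continuous_map X euclidean c \<Longrightarrow> continuous_map X euclidean d \<Longrightarrow>
   continuous_map X euclidean (\<lambda>x. c x + (w::complex) * d x)"
  by (intro continuous_map_add cm_mult continuous_map_canonical_const)

lemma bounded: "continuous_map X euclidean (f :: 'a \<Rightarrow> complex) \<Longrightarrow> \<exists>M. \<forall>x\<in>topspace X. norm (f x) \<le> M"
proof -
  assume c: "continuous_map X euclidean f"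
  have "compactin euclidean (f ` topspace X)"
    using image_compactin[OF cpt[unfolded compact_space_def] c] .
  hence "bounded (f ` topspace X)" by (simp add: compact_imp_bounded)
  thus ?thesis by (auto simp: bounded_iff)
qed

lemma key:
  assumes a: "continuous_map X euclidean a" and b: "continuous_map X euclideanreal b"
  shows "L (\<lambda>x. a x + z * of_real (b x)) = L a + z * L (\<lambda>x. of_real (b x))"
proof -
  have cb: "continuous_map X euclidean (\<lambda>x. complex_of_real (b x))" using b by (rule cm_of_real)
  have slope: "\<exists>r::real. L (\<lambda>x. c x + w * of_real (b x)) - L (\<lambda>x. c x + v * of_real (b x)) = (w - v) * of_real r"
    if c: "continuous_map X euclidean c" for c w v
  proof -
    obtain x where "L (\<lambda>x. c x + w * of_real (b x)) - L (\<lambda>x. c x + v * of_real (b x)) =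
        (c x + w * of_real (b x)) - (c x + v * of_real (b x))"
      using P1[OF cont_lin[OF c cb] cont_lin[OF c cb]] by auto
    thus ?thesis by (intro exI[of _ "b x"]) (simp add: algebra_simps)
  qed
  define \<phi> where "\<phi> w = L (\<lambda>x. a x + w * of_real (b x))" for w
  define \<psi> where "\<psi> w = L (\<lambda>x. 0 + w * of_real (b x))" for w
  have \<phi>: "\<phi> w = L a + w * (\<phi> 1 - \<phi> 0)" for w
    using affine_real_slopes[of \<phi> w] slope[OF a] by (simp add: \<phi>_def)
  have \<psi>: "\<psi> w = w * L (\<lambda>x. of_real (b x))" for w
    using affine_real_slopes[of \<psi> w] slope[of "\<lambda>x. 0"] by (simp add: \<psi>_def L0)
  define d where "d = \<phi> 1 - \<phi> 0 - L (\<lambda>x. of_real (b x))"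
  obtain M where M: "\<forall>x\<in>topspace X. norm (a x) \<le> M" using bounded[OF a] by auto
  have d0: "d = 0"
  proof (rule ccontr)
    assume "d \<noteq> 0"
    define w where "w = of_real (M + norm (L a) + 1) / d"
    obtain x where x: "x \<in> topspace X" "\<phi> w - \<psi> w = a x"
      using P1[OF cont_lin[OF a cb, of w] cont_lin[OF continuous_map_canonical_const[of X 0] cb, of w]]
      unfolding \<phi>_def \<psi>_def by auto
    have "\<phi> w - \<psi> w = L a + w * d" using \<phi>[of w] \<psi>[of w] by (simp add: d_def algebra_simps)
    also have "\<dots> = L a + of_real (M + norm (L a) + 1)" using \<open>d \<noteq> 0\<close> by (simp add: w_def)
    finally have "norm (a x) = norm (L a + of_real (M + norm (L a) + 1))" using x by simp
    also have "\<dots> \<ge> norm (complex_of_real (M + norm (L a) + 1)) - norm (L a)"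
      using norm_diff_ineq[of "complex_of_real (M + norm (L a) + 1)" "L a"] by (simp add: add.commute)
    also have "norm (complex_of_real (M + norm (L a) + 1)) = M + norm (L a) + 1"
      using M x(1) norm_ge_zero[of "a x"] by (simp only: norm_of_real) (smt (verit) norm_ge_zero)
    finally have "norm (a x) \<ge> M + 1" by simp
    thus False using M x by fastforce
  qed
  show ?thesis using \<phi>[of z] d0 by (simp add: \<phi>_def d_def)
qed

lemma add_real: "continuous_map X euclidean a \<Longrightarrow> continuous_map X euclideanreal b \<Longrightarrow>
   L (\<lambda>x. a x + of_real (b x)) = L a + L (\<lambda>x. of_real (b x))"
  using key[of a b 1] by simp

lemma decomp: assumes f: "continuous_map X euclidean f"
  shows "L f = L (\<lambda>x. of_real (Re (f x))) + \<i> * L (\<lambda>x. of_real (Im (f x)))"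
proof -
  have "f = (\<lambda>x. of_real (Re (f x)) + \<i> * of_real (Im (f x)))"
    by (rule ext) (simp add: complex_eq_iff)
  hence "L f = L (\<lambda>x. of_real (Re (f x)) + \<i> * of_real (Im (f x)))" by simp
  also have "\<dots> = L (\<lambda>x. of_real (Re (f x))) + \<i> * L (\<lambda>x. of_real (Im (f x)))"
    by (rule key) (intro cm_of_real cm_Re cm_Im f)+
  finally show ?thesis .
qed

lemma shift: assumes f: "continuous_map X euclidean f"
  shows "L (\<lambda>x. f x - c) = L f - c"
proof -
  have cont: "continuous_map X euclidean (\<lambda>x. f x - c)"
    by (intro continuous_map_diff f continuous_map_canonical_const)
  obtain x where "L f - L (\<lambda>x. f x - c) = f x - (f x - c)"
    using P1[OF f cont] by auto
  thus ?thesis by (simp add: algebra_simps)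
qed

lemma zero_parts: assumes f: "continuous_map X euclidean f" and z: "L f = 0"
  shows "L (\<lambda>x. of_real (Re (f x))) = 0" "L (\<lambda>x. of_real (Im (f x))) = 0"
proof -
  have r1: "Im (L (\<lambda>x. of_real (Re (f x)))) = 0" by (rule range_real) (intro cm_Re f)
  have r2: "Im (L (\<lambda>x. of_real (Im (f x)))) = 0" by (rule range_real) (intro cm_Im f)
  have e: "L (\<lambda>x. of_real (Re (f x))) + \<i> * L (\<lambda>x. of_real (Im (f x))) = 0"
    using decomp[OF f] z by simp
  from arg_cong[OF e, of Re] arg_cong[OF e, of Im] r1 r2
  show "L (\<lambda>x. of_real (Re (f x))) = 0" "L (\<lambda>x. of_real (Im (f x))) = 0"
    by (simp_all add: complex_eq_iff)
qed

lemma square_zero: assumes w: "continuous_map X euclideanreal w" and z: "L (\<lambda>x. of_real (w x)) = 0"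
  shows "L (\<lambda>x. of_real (w x ^ 2)) = 0"
proof -
  have cw2: "continuous_map X euclideanreal (\<lambda>x. w x ^ 2)" using w by (rule continuous_map_real_pow)
  have "L (\<lambda>x. of_real (w x ^ 2) + \<i> * of_real (w x)) = L (\<lambda>x. of_real (w x ^ 2))"
    using key[OF cm_of_real[OF cw2] w, of \<i>] z by simp
  moreover obtain x where "L (\<lambda>x. of_real (w x ^ 2) + \<i> * of_real (w x)) = of_real (w x ^ 2) + \<i> * of_real (w x)"
    using range[OF cont_lin[OF cm_of_real[OF cw2] cm_of_real[OF w], of \<i>]] by auto
  moreover have "Im (L (\<lambda>x. of_real (w x ^ 2))) = 0" by (rule range_real[OF cw2])
  ultimately have "w x = 0" "L (\<lambda>x. of_real (w x ^ 2)) = of_real (w x ^ 2)"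
    by (auto simp: complex_eq_iff)
  thus ?thesis by simp
qed

lemma sum_real: "finite G \<Longrightarrow> (\<And>i. i \<in> G \<Longrightarrow> continuous_map X euclideanreal (q i)) \<Longrightarrow>
  L (\<lambda>x. of_real (\<Sum>i\<in>G. q i x)) = (\<Sum>i\<in>G. L (\<lambda>x. of_real (q i x)))"
proof (induction G rule: finite_induct)
  case empty thus ?case using L0 by simp
next
  case (insert i G)
  have cs: "continuous_map X euclideanreal (\<lambda>x. \<Sum>i\<in>G. q i x)"
    using insert by (intro continuous_map_sum) auto
  have "L (\<lambda>x. of_real (\<Sum>i\<in>insert i G. q i x)) = L (\<lambda>x. of_real (q i x) + of_real (\<Sum>i\<in>G. q i x))"
    using insert by simp
  also have "\<dots> = L (\<lambda>x. of_real (q i x)) + L (\<lambda>x. of_real (\<Sum>i\<in>G. q i x))"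
    by (rule add_real[OF cm_of_real cs]) (use insert in auto)
  finally show ?case using insert by simp
qed

lemma point: "\<exists>p\<in>topspace X. \<forall>f. continuous_map X euclidean f \<longrightarrow> L f = f p"
proof (rule ccontr)
  assume "\<not> ?thesis"
  hence cov: "\<forall>p\<in>topspace X. \<exists>f. continuous_map X euclidean f \<and> f p \<noteq> L f" by metis
  define U where "U f = {x \<in> topspace X. f x \<in> - {L f}}" for f
  have "\<exists>\<F>. finite \<F> \<and> \<F> \<subseteq> U ` {f. continuous_map X euclidean f} \<and> topspace X \<subseteq> \<Union>\<F>"
  proof (rule cpt[unfolded compact_space_alt, rule_format], intro conjI ballI)
    show "openin X V" if V: "V \<in> U ` {f. continuous_map X euclidean f}" for V
    proof -
      obtain f where "continuous_map X euclidean f" "V = U f" using V by auto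
      thus ?thesis unfolding U_def by (metis openin_continuous_map_preimage open_Compl closed_singleton open_openin)
    qed
    show "topspace X \<subseteq> \<Union> (U ` {f. continuous_map X euclidean f})"
      using cov unfolding U_def by blast
  qed
  then obtain G where G: "finite G" "G \<subseteq> {f. continuous_map X euclidean f}" "topspace X \<subseteq> \<Union>(U ` G)"
    by (metis finite_subset_image)
  define q where "q f x = (Re (f x - L f))\<^sup>2 + (Im (f x - L f))\<^sup>2" for f x
  have Cf: "continuous_map X euclidean f" if "f \<in> G" for f using G that by auto
  have Ch: "continuous_map X euclidean (\<lambda>x. f x - L f)" if "f \<in> G" for f
    using Cf[OF that] by (intro continuous_map_diff continuous_map_canonical_const)
  have cq: "continuous_map X euclideanreal (q f)" if "f \<in> G" for f
    unfolding q_def using Ch[OF that]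
    by (intro continuous_map_add continuous_map_real_pow cm_Re cm_Im)
  have Lq: "L (\<lambda>x. of_real (q f x)) = 0" if "f \<in> G" for f
  proof -
    have h0: "L (\<lambda>x. f x - L f) = 0" using shift[OF Cf[OF that]] by simp
    have "L (\<lambda>x. of_real (q f x)) = L (\<lambda>x. of_real ((Re (f x - L f))\<^sup>2) + of_real ((Im (f x - L f))\<^sup>2))"
      unfolding q_def by simp
    also have "\<dots> = L (\<lambda>x. of_real ((Re (f x - L f))\<^sup>2)) + L (\<lambda>x. of_real ((Im (f x - L f))\<^sup>2))"
      using Ch[OF that]
      by (intro add_real cm_of_real continuous_map_real_pow cm_Re cm_Im)
    also have "\<dots> = 0"
      using square_zero[OF cm_Re[OF Ch[OF that]] zero_parts(1)[OF Ch[OF that] h0]]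
            square_zero[OF cm_Im[OF Ch[OF that]] zero_parts(2)[OF Ch[OF that] h0]] by simp
    finally show ?thesis .
  qed
  have "L (\<lambda>x. of_real (\<Sum>f\<in>G. q f x)) = 0"
    using sum_real[OF G(1), of q] cq Lq by simp
  moreover obtain x where x: "x \<in> topspace X" "L (\<lambda>x. of_real (\<Sum>f\<in>G. q f x)) = of_real (\<Sum>f\<in>G. q f x)"
  proof -
    have "continuous_map X euclideanreal (\<lambda>x. \<Sum>f\<in>G. q f x)"
      using cq by (intro continuous_map_sum[OF G(1)]) auto
    from range[OF cm_of_real[OF this]] that show ?thesis by blast
  qed
  ultimately have "complex_of_real (\<Sum>f\<in>G. q f x) = 0" by (simp only:)
  hence "(\<Sum>f\<in>G. q f x) = 0" by (simp only: of_real_eq_0_iff)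
  moreover have "\<forall>f\<in>G. 0 \<le> q f x" unfolding q_def by simp
  ultimately have "\<forall>f\<in>G. q f x = 0" using sum_nonneg_eq_0_iff[OF G(1), of "\<lambda>f. q f x"] by simp
  hence "\<forall>f\<in>G. f x = L f" unfolding q_def by (simp add: complex_eq_iff sum_power2_eq_zero_iff)
  moreover obtain f where "f \<in> G" "x \<in> U f" using G(3) x(1) by blast
  ultimately show False unfolding U_def by simp
qed

end
locale lcs =
  fixes tau :: "'e::ab_group_add topology" and smul :: "complex \<Rightarrow> 'e \<Rightarrow> 'e"
  assumes lcs: "complex_lcs tau smul"
begin

lemma ax:
  "smul a (x + y) = smul a x + smul a y" "smul (a + b) x = smul a x + smul b x"
  "smul a (smul b x) = smul (a * b) x" "smul 1 x = x" "topspace tau = UNIV" "Hausdorff_space tau"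
  "continuous_map (prod_topology euclidean tau) tau (\<lambda>(a, x). smul a x)"
  using lcs unfolding complex_lcs_def by auto

lemma sm0: "smul 0 x = 0"
  using ax(2)[of 0 0 x] by simp

lemma sma0: "smul a 0 = 0"
  using ax(1)[of a 0 0] by simp

lemma smdiff: "smul (a - b) x = smul a x - smul b x"
  using ax(2)[of "a - b" b x] by (simp add: algebra_simps)

lemma sminj: assumes "u \<noteq> 0" "smul a u = smul b u" shows "a = b"
proof (rule ccontr)
  assume ne: "a \<noteq> b"
  have z: "smul (a - b) u = 0" using assms(2) smdiff by simp
  have "u = smul (1 / (a - b) * (a - b)) u" using ne ax(4) by simp
  also have "\<dots> = smul (1 / (a - b)) (smul (a - b) u)" using ax(3) by simp
  also have "\<dots> = 0" using z sma0 by simp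
  finally show False using assms(1) by simp
qed

lemma cont_smul_left: "continuous_map tau tau (\<lambda>x. smul k x)"
proof -
  have "continuous_map tau (prod_topology euclidean tau) (\<lambda>x. (k, x))"
    by (intro continuous_map_pairedI continuous_map_canonical_const) (simp add: continuous_map_id[unfolded id_def])
  from continuous_map_compose[OF this ax(7)] show ?thesis by (simp add: o_def)
qed

lemma cont_tensor: assumes "continuous_map X euclidean f"
  shows "continuous_map X tau (\<lambda>x. smul (f x) u)"
proof -
  have "continuous_map X (prod_topology euclidean tau) (\<lambda>x. (f x, u))"
    using assms by (intro continuous_map_pairedI) (auto simp: ax(5))
  from continuous_map_compose[OF this ax(7)] show ?thesis by (simp add: o_def)
qed

lemma small_nbhd: assumes u: "u \<noteq> 0"
  shows "\<exists>V. openin tau V \<and> 0 \<in> V \<and> (\<forall>c. smul c u \<in> V \<longrightarrow> norm c < 1)"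
proof -
  obtain U0 W0 where U0: "openin tau U0" "openin tau W0" "0 \<in> U0" "u \<in> W0" "disjnt U0 W0"
    using ax(6) u ax(5) unfolding Hausdorff_space_def by (metis UNIV_I)
  have uU0: "u \<notin> U0" using U0 by (auto simp: disjnt_def)
  define S where "S = {z \<in> topspace (prod_topology euclidean tau). (\<lambda>(a, x). smul a x) z \<in> U0}"
  have oS: "openin (prod_topology euclidean tau) S"
    unfolding S_def by (rule openin_continuous_map_preimage[OF ax(7) U0(1)])
  have S0: "(0, 0) \<in> S" unfolding S_def using U0(3) sm0 ax(5) by simp
  obtain U1 V1 where UV: "openin euclidean U1" "openin tau V1" "0 \<in> U1" "0 \<in> V1" "U1 \<times> V1 \<subseteq> S"
    using iffD1[OF openin_prod_topology_alt oS, rule_format, OF S0] by blast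
  obtain \<delta> where \<delta>: "\<delta> > 0" "ball 0 \<delta> \<subseteq> U1" using UV(1,3) by (auto simp: open_contains_ball)
  define k where "k = complex_of_real (2 / \<delta>)"
  define V2 where "V2 = {x \<in> topspace tau. smul k x \<in> V1}"
  have "openin tau V2" unfolding V2_def by (rule openin_continuous_map_preimage[OF cont_smul_left UV(2)])
  moreover have "0 \<in> V2" unfolding V2_def using sma0 UV(4) ax(5) by simp
  moreover have "norm c < 1" if "smul c u \<in> V2" for c
  proof (rule ccontr)
    assume "\<not> norm c < 1"
    hence c1: "norm c \<ge> 1" by simp
    have kc: "smul (k * c) u \<in> V1" using that ax(3) unfolding V2_def by simp
    have kc0: "k * c \<noteq> 0" using c1 \<delta> by (auto simp: k_def)
    have "norm (1 / (k * c)) = \<delta> / (2 * norm c)"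
      using \<delta> by (simp add: k_def norm_divide norm_mult)
    also have "\<dots> \<le> \<delta> / 2" using c1 \<delta> by (simp add: divide_le_eq field_simps)
    also have "\<dots> < \<delta>" using \<delta> by simp
    finally have "1 / (k * c) \<in> U1" using \<delta> by (auto simp: dist_norm)
    hence "(1 / (k * c), smul (k * c) u) \<in> S" using kc UV(5) by blast
    hence "smul (1 / (k * c)) (smul (k * c) u) \<in> U0" unfolding S_def by simp
    hence "u \<in> U0" using ax(3,4) kc0 by simp
    thus False using uU0 by simp
  qed
  ultimately show ?thesis by blast
qed

end

theorem lemma4p3:
  fixes X :: "'a topology" and Y :: "'b topology"
    and tau :: "'e::ab_group_add topology" and smul :: "complex \<Rightarrow> 'e \<Rightarrow> 'e"
    and T :: "('a \<Rightarrow> 'e) \<Rightarrow> ('b \<Rightarrow> 'e)"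
  assumes "compact_space X" "Hausdorff_space X" "topspace X \<noteq> {}"
    and "compact_space Y" "Hausdorff_space Y" "topspace Y \<noteq> {}"
    and "complex_lcs tau smul" "\<exists>e::'e. e \<noteq> 0"
    and "\<And>F. continuous_map X tau F \<Longrightarrow> continuous_map Y tau (T F)"
    and "\<And>F G. continuous_map X tau F \<Longrightarrow> continuous_map X tau G \<Longrightarrow>
            Ran Y (\<lambda>y. T F y - T G y) \<subseteq> Ran X (\<lambda>x. F x - G x)"
    and "\<forall>y\<in>topspace Y. T (\<lambda>x. 0) y = 0"
  shows "\<forall>u. u \<noteq> 0 \<longrightarrow>
           (\<exists>\<phi>. continuous_map Y X \<phi> \<and>
              (\<forall>f. continuous_map X euclidean f \<longrightarrow>
                 (\<forall>y\<in>topspace Y. tildeT smul T u f y = f (\<phi> y))) \<and>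
              (\<forall>f g a b. continuous_map X euclidean f \<longrightarrow> continuous_map X euclidean g \<longrightarrow>
                 (\<forall>y\<in>topspace Y. tildeT smul T u (\<lambda>x. a * f x + b * g x) y
                    = a * tildeT smul T u f y + b * tildeT smul T u g y)))"
proof (intro allI impI)
  fix u :: 'e assume u: "u \<noteq> 0"
  interpret lcs tau smul by unfold_locales (rule assms(7))
  have tens: "tensor smul f u = (\<lambda>x. smul (f x) u)" for f by (simp add: tensor_def)
  have c0: "continuous_map X tau (\<lambda>x. 0)" using ax(5) by simp
  have Tdiff: "\<exists>x\<in>topspace X. T (tensor smul f u) y - T (tensor smul g u) y = smul (f x) u - smul (g x) u"
    if f: "continuous_map X euclidean f" and g: "continuous_map X euclidean g" and y: "y \<in> topspace Y" for f g y
  proof -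
    have cF: "continuous_map X tau (tensor smul f u)" unfolding tens by (rule cont_tensor[OF f])
    have cG: "continuous_map X tau (tensor smul g u)" unfolding tens by (rule cont_tensor[OF g])
    have "T (tensor smul f u) y - T (tensor smul g u) y \<in> Ran Y (\<lambda>y. T (tensor smul f u) y - T (tensor smul g u) y)"
      unfolding Ran_def using y by blast
    also have "\<dots> \<subseteq> Ran X (\<lambda>x. tensor smul f u x - tensor smul g u x)" by (rule assms(10)[OF cF cG])
    finally show ?thesis unfolding Ran_def tens by auto
  qed
  have z0: "tensor smul (\<lambda>x. 0) u = (\<lambda>x. 0)" unfolding tens by (simp add: sm0)
  have Tval: "\<exists>x\<in>topspace X. T (tensor smul f u) y = smul (f x) u"
    if f: "continuous_map X euclidean f" and y: "y \<in> topspace Y" for f y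
  proof -
    have "T (tensor smul (\<lambda>x. 0) u) y = 0" unfolding z0 using assms(11) y by blast
    thus ?thesis using Tdiff[OF f continuous_map_canonical_const[of X 0] y] sm0 by simp
  qed
  have tilde: "T (tensor smul f u) y = smul (tildeT smul T u f y) u \<and> (\<exists>x\<in>topspace X. tildeT smul T u f y = f x)"
    if f: "continuous_map X euclidean f" and y: "y \<in> topspace Y" for f y
  proof -
    obtain x where x: "x \<in> topspace X" "T (tensor smul f u) y = smul (f x) u" using Tval[OF f y] by blast
    have "tildeT smul T u f y = f x" unfolding tildeT_def
    proof (rule the_equality)
      show "T (tensor smul f u) y = smul (f x) u" by (rule x(2))
      show "c = f x" if "T (tensor smul f u) y = smul c u" for c
        using sminj[OF u] that x(2) by simp
    qed
    thus ?thesis using x by auto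
  qed
  have RL: "rangeL X (\<lambda>f. tildeT smul T u f y)" if y: "y \<in> topspace Y" for y
  proof
    show "compact_space X" "topspace X \<noteq> {}" by (rule assms(1), rule assms(3))
    show "tildeT smul T u (\<lambda>x. 0) y = 0" using tilde[OF continuous_map_canonical_const y] by auto
    show "\<exists>x\<in>topspace X. tildeT smul T u f y - tildeT smul T u g y = f x - g x"
      if f: "continuous_map X euclidean f" and g: "continuous_map X euclidean g" for f g
    proof -
      obtain x where x: "x \<in> topspace X" "T (tensor smul f u) y - T (tensor smul g u) y = smul (f x) u - smul (g x) u"
        using Tdiff[OF f g y] by blast
      hence "smul (tildeT smul T u f y - tildeT smul T u g y) u = smul (f x - g x) u"
        using tilde[OF f y] tilde[OF g y] by (simp add: smdiff)
      thus ?thesis using sminj[OF u] x(1) by blast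
    qed
  qed
  define \<phi> where "\<phi> y = (SOME p. p \<in> topspace X \<and> (\<forall>f. continuous_map X euclidean f \<longrightarrow> tildeT smul T u f y = f p))" for y
  have \<phi>: "\<phi> y \<in> topspace X \<and> (\<forall>f. continuous_map X euclidean f \<longrightarrow> tildeT smul T u f y = f (\<phi> y))"
    if y: "y \<in> topspace Y" for y
    unfolding \<phi>_def by (rule someI_ex) (use rangeL.point[OF RL[OF y]] in blast)
  have cr: "completely_regular_space X"
    using normal_imp_completely_regular_space[OF compact_Hausdorff_or_regular_imp_normal_space[OF assms(1) disjI1[OF assms(2)]] disjI1[OF assms(2)]] .
  obtain V where V: "openin tau V" "0 \<in> V" "\<And>c. smul c u \<in> V \<Longrightarrow> norm c < 1" using small_nbhd[OF u] by blast
  have cont: "continuous_map Y X \<phi>"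
    unfolding continuous_map_def
  proof (intro conjI allI impI)
    show "\<phi> \<in> topspace Y \<rightarrow> topspace X" using \<phi> by auto
    fix U assume U: "openin X U"
    show "openin Y {y \<in> topspace Y. \<phi> y \<in> U}"
    proof (subst openin_subopen, intro ballI)
      fix y0 assume y0: "y0 \<in> {y \<in> topspace Y. \<phi> y \<in> U}"
      obtain f where f: "continuous_map X euclideanreal f" "f (\<phi> y0) = 0" "f ` (topspace X - U) \<subseteq> {1}"
        using iffD1[OF completely_regular_space_alt' cr, rule_format, OF U] y0 by blast
      define g where "g x = complex_of_real (f x)" for x
      have cg: "continuous_map X euclidean g" unfolding g_def by (rule cm_of_real[OF f(1)])
      define Nb where "Nb = {y \<in> topspace Y. T (tensor smul g u) y \<in> V}"
      have "openin Y Nb" unfolding Nb_def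
        by (rule openin_continuous_map_preimage[OF assms(9) V(1)]) (unfold tens, rule cont_tensor[OF cg])
      moreover have "y0 \<in> Nb"
        using tilde[OF cg, of y0] \<phi>[of y0] y0 cg f(2) sm0 V(2) unfolding Nb_def g_def by auto
      moreover have "Nb \<subseteq> {y \<in> topspace Y. \<phi> y \<in> U}"
      proof
        fix y assume yO: "y \<in> Nb"
        hence y: "y \<in> topspace Y" unfolding Nb_def by simp
        have "smul (tildeT smul T u g y) u \<in> V" using yO tilde[OF cg y] unfolding Nb_def by simp
        hence "norm (g (\<phi> y)) < 1" using V(3) \<phi>[OF y] cg by simp
        hence "f (\<phi> y) \<noteq> 1" unfolding g_def by auto
        hence "\<phi> y \<in> U" using f(3) \<phi>[OF y] by blast
        thus "y \<in> {y \<in> topspace Y. \<phi> y \<in> U}" using y by simp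
      qed
      ultimately show "\<exists>T. openin Y T \<and> y0 \<in> T \<and> T \<subseteq> {y \<in> topspace Y. \<phi> y \<in> U}" by blast
    qed
  qed
  show "\<exists>\<phi>. continuous_map Y X \<phi> \<and>
              (\<forall>f. continuous_map X euclidean f \<longrightarrow>
                 (\<forall>y\<in>topspace Y. tildeT smul T u f y = f (\<phi> y))) \<and>
              (\<forall>f g a b. continuous_map X euclidean f \<longrightarrow> continuous_map X euclidean g \<longrightarrow>
                 (\<forall>y\<in>topspace Y. tildeT smul T u (\<lambda>x. a * f x + b * g x) y
                    = a * tildeT smul T u f y + b * tildeT smul T u g y))"
  proof (intro exI conjI allI impI ballI)
    show "continuous_map Y X \<phi>" by (rule cont)
    show "tildeT smul T u f y = f (\<phi> y)" if "continuous_map X euclidean f" "y \<in> topspace Y" for f y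
      using \<phi> that by blast
    fix f g :: "'a \<Rightarrow> complex" and a b y
    assume f: "continuous_map X euclidean f" and g: "continuous_map X euclidean g" and y: "y \<in> topspace Y"
    have "continuous_map X euclidean (\<lambda>x. a * f x + b * g x)"
      by (intro continuous_map_add cm_mult continuous_map_canonical_const f g)
    thus "tildeT smul T u (\<lambda>x. a * f x + b * g x) y = a * tildeT smul T u f y + b * tildeT smul T u g y"
      using \<phi>[OF y] f g by simp
  qed
qed

end
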